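(* Let $s\ge1$, let $F_1,\ldots,F_N$ be distribution functions on $\mathbb{R}^s$ with finite second moments, for ${\bf s}=\{i_1,\ldots,i_m\}\subset\{1,\ldots,N\}$ let $F_{\bf s}=F_{i_1}\ast\cdots\ast F_{i_m}$, and let $F=F_1\ast\cdots\ast F_N$. Let $t_{{\bf s},n}$ be the Pitman estimator of $\theta\in\mathbb{R}^s$ from a sample of size $n$ from $F_{\bf s}(x-\theta)$ and $t_n$ that from a sample of size $n$ from $F(x-\theta)$. Then for any $n\ge1$ and $1\le m\le N$, $$\mathrm{var}(t_n)\ \ge\ \frac{1}{\binom{N-1}{m-1}}\sum_{\bf s}\mathrm{var}(t_{{\bf s},n}),$$ where $\mathrm{var}$ denotes the covariance matrix, $A\ge B$ means $A-B$ is nonnegative definite, and the sum is over all subsets ${\bf s}$ of $\{1,\ldots,N\}$ with exactly $m$ elements.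
   Context: A sample of size $n$ from $G(x-\theta)$ is $x_1,\ldots,x_n$ i.i.d. in $\mathbb{R}^s$ with $x_i-\theta\sim G$. An estimator $t$ is equivariant if $t(x_1+c,\ldots,x_n+c)=t(x_1,\ldots,x_n)+c$ for all $c\in\mathbb{R}^s$. The Pitman estimator is the equivariant estimator whose covariance matrix is minimal in the Loewner order among equivariant estimators; it equals $\bar x-E_0(\bar x\mid x_1-\bar x,\ldots,x_n-\bar x)$, with $E_0$ expectation under $\theta=0$. Convolution of distributions on $\mathbb{R}^s$ is the distribution of the sum of independent random vectors. *)

theory Defs
  imports "HOL-Probability.Probability"
begin

text \<open>A distribution on R^s (here an abstract euclidean space 'a, s = DIM('a) \<ge> 1)
  is a Borel probability measure; finite second moments.\<close>
definition distr_2nd :: "'a::euclidean_space measure \<Rightarrow> bool" where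
  "distr_2nd G \<longleftrightarrow> prob_space G \<and> sets G = sets borel \<and> integrable G (\<lambda>x. norm x ^ 2)"

definition conv_set :: "(nat \<Rightarrow> 'a::euclidean_space measure) \<Rightarrow> nat set \<Rightarrow> 'a measure" where
  "conv_set F S = distr (PiM S F) borel (\<lambda>x. \<Sum>i\<in>S. x i)"

text \<open>Law of a sample x_1..x_n (indices 0..n-1) i.i.d. from G(x - \<theta>).\<close>
definition sample_law :: "'a::euclidean_space measure \<Rightarrow> nat \<Rightarrow> 'a \<Rightarrow> (nat \<Rightarrow> 'a) measure" where
  "sample_law G n \<theta> = PiM {..<n} (\<lambda>_. distr G borel (\<lambda>x. x + \<theta>))"

definition equivariant :: "nat \<Rightarrow> ((nat \<Rightarrow> 'a::euclidean_space) \<Rightarrow> 'a) \<Rightarrow> bool" where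
  "equivariant n t \<longleftrightarrow> t \<in> borel_measurable (PiM {..<n} (\<lambda>_. borel)) \<and>
     (\<forall>x\<in>extensional {..<n}. \<forall>c. t (restrict (\<lambda>i. x i + c) {..<n}) = t x + c)"

text \<open>Quadratic form of the covariance matrix of t under M, evaluated at u:
  u^T cov(t) u = var (u \<bullet> t).\<close>
definition cov_form :: "'b measure \<Rightarrow> ('b \<Rightarrow> 'a::euclidean_space) \<Rightarrow> 'a \<Rightarrow> real" where
  "cov_form M t u = (\<integral>x. (u \<bullet> t x - (\<integral>y. u \<bullet> t y \<partial>M)) ^ 2 \<partial>M)"

definition has_2nd :: "'b measure \<Rightarrow> ('b \<Rightarrow> 'a::euclidean_space) \<Rightarrow> bool" where
  "has_2nd M t \<longleftrightarrow> integrable M (\<lambda>x. norm (t x) ^ 2)"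

definition is_pitman :: "'a::euclidean_space measure \<Rightarrow> nat \<Rightarrow> ((nat \<Rightarrow> 'a) \<Rightarrow> 'a) \<Rightarrow> bool" where
  "is_pitman G n t \<longleftrightarrow> equivariant n t \<and> (\<forall>\<theta>. has_2nd (sample_law G n \<theta>) t) \<and>
     (\<forall>t'. equivariant n t' \<and> (\<forall>\<theta>. has_2nd (sample_law G n \<theta>) t') \<longrightarrow>
        (\<forall>\<theta> u. cov_form (sample_law G n \<theta>) t u \<le> cov_form (sample_law G n \<theta>) t' u))"

end

theory Submission
  imports Defs
begin


definition mob :: "('s set \<Rightarrow> real) \<Rightarrow> 's set \<Rightarrow> real" where
  "mob \<psi> T = (\<Sum>R\<in>Pow T. (-1)^card(T-R) * \<psi> R)"

lemma mob_empty[simp]: "mob \<psi> {} = \<psi> {}"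
  by (simp add: mob_def)

lemma mob_insert:
  assumes "finite T" "a \<notin> T"
  shows "mob \<psi> (insert a T) = mob (\<lambda>R. \<psi> (insert a R)) T - mob \<psi> T"
proof -
  have disj: "Pow T \<inter> insert a ` Pow T = {}" using assms by auto
  have inj: "inj_on (insert a) (Pow T)" using assms by (intro inj_onI) (metis PowD insert_ident subsetD)
  have c1: "card (insert a T - R) = Suc (card (T - R))" if "R \<in> Pow T" for R
  proof -
    have "insert a T - R = insert a (T - R)" using that assms by auto
    then show ?thesis using assms by simp
  qed
  have c2: "card (insert a T - insert a R) = card (T - R)" if "R \<in> Pow T" for R
  proof -
    have "insert a T - insert a R = T - R" using that assms by auto
    then show ?thesis by simp
  qed
  have "mob \<psi> (insert a T) = (\<Sum>R\<in>Pow T. (-1)^card(insert a T-R) * \<psi> R)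
      + (\<Sum>R\<in>insert a ` Pow T. (-1)^card(insert a T-R) * \<psi> R)"
    unfolding mob_def Pow_insert using assms disj by (simp add: sum.union_disjoint)
  also have "(\<Sum>R\<in>insert a ` Pow T. (-1)^card(insert a T-R) * \<psi> R)
      = (\<Sum>R\<in>Pow T. (-1)^card(insert a T-insert a R) * \<psi> (insert a R))"
    by (simp add: sum.reindex[OF inj])
  also have "\<dots> = mob (\<lambda>R. \<psi> (insert a R)) T"
    unfolding mob_def by (intro sum.cong refl arg_cong2[where f="(*)"] arg_cong[where f="\<lambda>n. (-1::real)^n"] c2)
  also have "(\<Sum>R\<in>Pow T. (-1)^card(insert a T-R) * \<psi> R) = - mob \<psi> T"
    unfolding mob_def sum_negf[symmetric] by (intro sum.cong refl) (simp add: c1)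
  finally show ?thesis by simp
qed

lemma mob_sum:
  assumes "finite S"
  shows "(\<Sum>T\<in>Pow S. mob \<psi> T) = \<psi> S"
  using assms
proof (induction S arbitrary: \<psi> rule: finite_induct)
  case empty
  then show ?case by simp
next
  case (insert a S)
  have disj: "Pow S \<inter> insert a ` Pow S = {}" using insert by auto
  have inj: "inj_on (insert a) (Pow S)" using insert by (intro inj_onI) (metis PowD insert_ident subsetD)
  have "(\<Sum>T\<in>Pow (insert a S). mob \<psi> T) = (\<Sum>T\<in>Pow S. mob \<psi> T) + (\<Sum>T\<in>Pow S. mob \<psi> (insert a T))"
    unfolding Pow_insert using insert disj by (simp add: sum.union_disjoint sum.reindex[OF inj])
  also have "(\<Sum>T\<in>Pow S. mob \<psi> (insert a T)) = (\<Sum>T\<in>Pow S. mob (\<lambda>R. \<psi> (insert a R)) T - mob \<psi> T)"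
    apply (rule sum.cong, simp)
    apply (rule mob_insert)
    using insert by (auto intro: finite_subset)
  also have "\<dots> = \<psi> (insert a S) - \<psi> S"
    by (simp add: sum_subtractf insert.IH)
  finally show ?case using insert.IH by simp
qed

lemma mob_cancel:
  assumes "finite T" "k \<in> T" "\<And>R. R \<subseteq> T - {k} \<Longrightarrow> \<psi> (insert k R) = \<psi> R"
  shows "mob \<psi> T = 0"
proof -
  have T: "T = insert k (T - {k})" using assms by auto
  have "mob \<psi> T = mob (\<lambda>R. \<psi> (insert k R)) (T - {k}) - mob \<psi> (T - {k})"
    by (subst T, rule mob_insert) (use assms in auto)
  also have "mob (\<lambda>R. \<psi> (insert k R)) (T - {k}) = mob \<psi> (T - {k})"
    unfolding mob_def by (rule sum.cong) (auto simp: assms(3))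
  finally show ?thesis by simp
qed

lemma gram_mob:
  assumes "finite T"
  shows "(\<Sum>R\<in>Pow T. \<Sum>R'\<in>Pow T. ((-1)^card(T-R) * (-1)^card(T-R')) * \<psi> (R \<inter> R')) = mob \<psi> T"
proof -
  have "(\<Sum>R\<in>Pow T. \<Sum>R'\<in>Pow T. ((-1)^card(T-R) * (-1)^card(T-R')) * \<psi> (R \<inter> R'))
     = (\<Sum>R\<in>Pow T. (-1)^card(T-R) * mob (\<lambda>R'. \<psi> (R \<inter> R')) T)"
    unfolding mob_def sum_distrib_left by (simp add: mult.assoc)
  also have "\<dots> = (-1)^card(T-T) * mob (\<lambda>R'. \<psi> (T \<inter> R')) T
      + (\<Sum>R\<in>Pow T - {T}. (-1)^card(T-R) * mob (\<lambda>R'. \<psi> (R \<inter> R')) T)"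
    using assms by (subst sum.remove[of _ T]) auto
  also have "(\<Sum>R\<in>Pow T - {T}. (-1)^card(T-R) * mob (\<lambda>R'. \<psi> (R \<inter> R')) T) = 0"
  proof (rule sum.neutral, rule ballI)
    fix R assume R: "R \<in> Pow T - {T}"
    then obtain k where k: "k \<in> T" "k \<notin> R" by auto
    have "mob (\<lambda>R'. \<psi> (R \<inter> R')) T = 0"
      by (rule mob_cancel[OF assms k(1)]) (use k in \<open>auto intro!: arg_cong[where f=\<psi>]\<close>)
    then show "(-1)^card(T-R) * mob (\<lambda>R'. \<psi> (R \<inter> R')) T = 0" by simp
  qed
  also have "mob (\<lambda>R'. \<psi> (T \<inter> R')) T = mob \<psi> T"
    unfolding mob_def by (rule sum.cong) (auto intro!: arg_cong[where f=\<psi>])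
  finally show ?thesis by simp
qed

lemma card_subsets_containing:
  assumes "finite I" "k \<in> I" "1 \<le> m"
  shows "card {S. S \<subseteq> I \<and> card S = m \<and> k \<in> S} = (card I - 1) choose (m - 1)"
proof -
  have "{S. S \<subseteq> I \<and> card S = m \<and> k \<in> S} = insert k ` {S. S \<subseteq> I - {k} \<and> card S = m - 1}"
  proof (intro equalityI subsetI)
    fix S assume "S \<in> {S. S \<subseteq> I \<and> card S = m \<and> k \<in> S}"
    then have S: "S \<subseteq> I" "k \<in> S" "card S = m" by auto
    have "S = insert k (S - {k})" using S by auto
    moreover have "card (S - {k}) = m - 1" using S assms by (simp add: finite_subset)
    ultimately show "S \<in> insert k ` {S. S \<subseteq> I - {k} \<and> card S = m - 1}" using S
      by (intro image_eqI[of _ _ "S - {k}"]) auto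
  next
    fix S' assume "S' \<in> insert k ` {S. S \<subseteq> I - {k} \<and> card S = m - 1}"
    then obtain S where S: "S \<subseteq> I - {k}" "card S = m - 1" and S': "S' = insert k S" by auto
    have "finite S" using S assms by (meson finite_Diff finite_subset)
    moreover have "k \<notin> S" using S by auto
    ultimately have "card S' = m" using S S' assms by simp
    then show "S' \<in> {S. S \<subseteq> I \<and> card S = m \<and> k \<in> S}" using S S' assms by auto
  qed
  moreover have "inj_on (insert k) {S. S \<subseteq> I - {k} \<and> card S = m - 1}"
    by (intro inj_onI) (metis (no_types, lifting) Diff_insert_absorb mem_Collect_eq subset_Diff_insert)
  ultimately have "card {S. S \<subseteq> I \<and> card S = m \<and> k \<in> S} = card {S. S \<subseteq> I - {k} \<and> card S = m - 1}"
    by (simp add: card_image)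
  also have "\<dots> = card (I - {k}) choose (m - 1)" using assms by (simp add: n_subsets)
  finally show ?thesis using assms by simp
qed

lemma variance_drop_comb:
  fixes \<psi> :: "'s set \<Rightarrow> real"
  assumes I: "finite I" and m: "1 \<le> m" "m \<le> card I"
    and pos: "\<And>T. T \<subseteq> I \<Longrightarrow> T \<noteq> {} \<Longrightarrow> mob \<psi> T \<ge> 0"
  shows "(\<Sum>S\<in>{S. S \<subseteq> I \<and> card S = m}. \<psi> S - \<psi> {}) \<le> real ((card I - 1) choose (m - 1)) * (\<psi> I - \<psi> {})"
proof -
  let ?A = "{S. S \<subseteq> I \<and> card S = m}"
  let ?C = "real ((card I - 1) choose (m - 1))"
  have finA: "finite ?A" using I by (auto intro: finite_subset[of _ "Pow I"])
  have eq1: "\<psi> S - \<psi> {} = (\<Sum>T\<in>{T \<in> Pow I - {{}}. T \<subseteq> S}. mob \<psi> T)" if "S \<subseteq> I" for S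
  proof -
    have fS: "finite S" using that I by (rule finite_subset)
    have "\<psi> S = mob \<psi> {} + (\<Sum>T\<in>Pow S - {{}}. mob \<psi> T)"
      using mob_sum[OF fS, of \<psi>] fS by (subst (asm) sum.remove[of _ "{}"]) auto
    moreover have "Pow S - {{}} = {T \<in> Pow I - {{}}. T \<subseteq> S}" using that by auto
    ultimately show ?thesis by simp
  qed
  have "(\<Sum>S\<in>?A. \<psi> S - \<psi> {}) = (\<Sum>S\<in>?A. \<Sum>T\<in>{T \<in> Pow I - {{}}. T \<subseteq> S}. mob \<psi> T)"
    by (rule sum.cong) (auto simp: eq1)
  also have "\<dots> = (\<Sum>T\<in>Pow I - {{}}. \<Sum>S\<in>{S \<in> ?A. T \<subseteq> S}. mob \<psi> T)"
    using finA I by (subst sum.swap_restrict) auto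
  also have "\<dots> = (\<Sum>T\<in>Pow I - {{}}. real (card {S \<in> ?A. T \<subseteq> S}) * mob \<psi> T)"
    by simp
  also have "\<dots> \<le> (\<Sum>T\<in>Pow I - {{}}. ?C * mob \<psi> T)"
  proof (rule sum_mono)
    fix T assume T: "T \<in> Pow I - {{}}"
    then obtain k where k: "k \<in> T" by auto
    have "card {S \<in> ?A. T \<subseteq> S} \<le> card {S. S \<subseteq> I \<and> card S = m \<and> k \<in> S}"
      by (rule card_mono) (use I k in \<open>auto intro: finite_subset[of _ "Pow I"]\<close>)
    also have "\<dots> = (card I - 1) choose (m - 1)"
      using card_subsets_containing[OF I _ m(1), of k] T k by auto
    finally have "real (card {S \<in> ?A. T \<subseteq> S}) \<le> ?C" by simp
    moreover have "mob \<psi> T \<ge> 0" using T pos by auto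
    ultimately show "real (card {S \<in> ?A. T \<subseteq> S}) * mob \<psi> T \<le> ?C * mob \<psi> T"
      by (rule mult_right_mono)
  qed
  also have "\<dots> = ?C * (\<Sum>T\<in>Pow I - {{}}. mob \<psi> T)"
    by (simp add: sum_distrib_left)
  also have "{T \<in> Pow I - {{}}. T \<subseteq> I} = Pow I - {{}}" by auto
  then have "(\<Sum>T\<in>Pow I - {{}}. mob \<psi> T) = \<psi> I - \<psi> {}" using eq1[of I] by simp
  finally show ?thesis .
qed


lemma jensen_nn:
  fixes f :: "'x \<Rightarrow> 'c::{banach,second_countable_topology}"
  assumes N: "prob_space N" and f[measurable]: "f \<in> borel_measurable N"
  shows "ennreal (norm (integral\<^sup>L N f) ^ 2) \<le> (\<integral>\<^sup>+z. ennreal (norm (f z) ^ 2) \<partial>N)"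
proof (cases "integrable N f")
  case True
  have "ennreal (norm (integral\<^sup>L N f) ^ 2) = ennreal (norm (integral\<^sup>L N f)) ^ 2"
    by (simp add: ennreal_power)
  also have "\<dots> \<le> (\<integral>\<^sup>+z. ennreal (norm (f z)) \<partial>N) ^ 2"
    by (intro power_mono integral_norm_bound_ennreal True) simp
  also have "\<dots> = (\<integral>\<^sup>+z. ennreal (norm (f z)) * 1 \<partial>N) ^ 2" by simp
  also have "\<dots> \<le> (\<integral>\<^sup>+z. ennreal (norm (f z)) ^ 2 \<partial>N) * (\<integral>\<^sup>+z. 1 ^ 2 \<partial>N)"
    by (rule Cauchy_Schwarz_nn_integral) auto
  also have "\<dots> = (\<integral>\<^sup>+z. ennreal (norm (f z) ^ 2) \<partial>N)"
    using N by (simp add: ennreal_power prob_space.emeasure_space_1)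
  finally show ?thesis .
next
  case False
  then show ?thesis by (simp add: not_integrable_integral_eq)
qed

lemma integrable_L2_mult:
  fixes f g :: "'x \<Rightarrow> real"
  assumes [measurable]: "f \<in> borel_measurable M" "g \<in> borel_measurable M"
    and "integrable M (\<lambda>x. f x ^ 2)" "integrable M (\<lambda>x. g x ^ 2)"
  shows "integrable M (\<lambda>x. f x * g x)"
proof (rule Bochner_Integration.integrable_bound[of _ "\<lambda>x. f x ^ 2 + g x ^ 2"])
  show "integrable M (\<lambda>x. f x ^ 2 + g x ^ 2)" using assms by simp
  show "AE x in M. norm (f x * g x) \<le> norm (f x ^ 2 + g x ^ 2)"
  proof (rule AE_I2)
    fix x
    have a: "2 * \<bar>f x\<bar> * \<bar>g x\<bar> \<le> f x ^ 2 + g x ^ 2"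
      using sum_squares_bound[of "\<bar>f x\<bar>" "\<bar>g x\<bar>"] by (simp add: power2_abs)
    have b: "\<bar>f x * g x\<bar> \<le> 2 * \<bar>f x\<bar> * \<bar>g x\<bar>" by (simp add: abs_mult)
    have c: "norm (f x ^ 2 + g x ^ 2) = f x ^ 2 + g x ^ 2" by simp
    show "norm (f x * g x) \<le> norm (f x ^ 2 + g x ^ 2)"
      unfolding c real_norm_def using a b by linarith
  qed
  show "(\<lambda>x. f x * g x) \<in> borel_measurable M" by measurable
qed

locale anova =
  fixes M :: "'i \<Rightarrow> 'b measure" and K :: "'i set"
  assumes prob: "\<And>i. prob_space (M i)" and finK: "finite K"
begin

sublocale product_prob_space M K by (rule product_prob_spaceI) (rule prob)

abbreviation "\<Omega> \<equiv> PiM K M"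

lemma prob_PiM: "prob_space (PiM B M)"
  by (rule prob_space_PiM) (rule prob)

definition Pf :: "'i set \<Rightarrow> (('i \<Rightarrow> 'b) \<Rightarrow> 'c::{banach,second_countable_topology}) \<Rightarrow> ('i \<Rightarrow> 'b) \<Rightarrow> 'c" where
  "Pf B f x = (\<integral>z. f (merge B (K - B) (x, z)) \<partial>PiM (K - B) M)"

lemma Pf_restrict: "Pf B f (restrict x B) = Pf B f x"
  by (simp add: Pf_def)

lemma merge_merge_same: "merge B C (merge B C (x, z), z') = merge B C (x, z')"
  by (auto simp: merge_def fun_eq_iff)

lemma Pf_merge: "Pf B f (merge B (K - B) (x, z)) = Pf B f x"
  by (simp add: Pf_def merge_merge_same)

lemma KB: "B \<subseteq> K \<Longrightarrow> B \<union> (K - B) = K" by auto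

lemma meas_merge:
  assumes "B \<subseteq> K"
  shows "merge B (K - B) \<in> measurable (PiM B M \<Otimes>\<^sub>M PiM (K - B) M) \<Omega>"
  using measurable_merge[of B "K - B" M] KB[OF assms] by simp

lemma meas_Pf_B:
  assumes B: "B \<subseteq> K" and f[measurable]: "f \<in> borel_measurable \<Omega>"
  shows "Pf B f \<in> borel_measurable (PiM B M)"
proof -
  interpret S: prob_space "PiM (K - B) M" by (rule prob_PiM)
  have "(\<lambda>p. f (merge B (K - B) p)) \<in> borel_measurable (PiM B M \<Otimes>\<^sub>M PiM (K - B) M)"
    using measurable_comp[OF meas_merge[OF B] f] by (simp add: comp_def)
  then show ?thesis unfolding Pf_def
    by (intro S.borel_measurable_lebesgue_integral) (simp add: case_prod_beta')
qed

lemma meas_Pf: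
  assumes B: "B \<subseteq> K" and f[measurable]: "f \<in> borel_measurable \<Omega>"
  shows "Pf B f \<in> borel_measurable \<Omega>"
proof -
  have "(\<lambda>x. Pf B f (restrict x B)) \<in> borel_measurable \<Omega>"
    using measurable_comp[OF measurable_restrict_subset[OF B] meas_Pf_B[OF B f]] by (simp add: comp_def)
  then show ?thesis by (simp add: Pf_restrict)
qed

lemma marg_restrict: "B \<subseteq> K \<Longrightarrow> distr \<Omega> (PiM B M) (\<lambda>x. restrict x B) = PiM B M"
  using distr_restrict[of B K] finK by simp

lemma integral_restrict:
  fixes g :: "_ \<Rightarrow> 'c::{banach,second_countable_topology}"
  assumes B: "B \<subseteq> K" and g: "g \<in> borel_measurable (PiM B M)"
  shows "(\<integral>x. g (restrict x B) \<partial>\<Omega>) = (\<integral>x. g x \<partial>PiM B M)"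
  using integral_distr[OF measurable_restrict_subset[OF B] g] marg_restrict[OF B] by simp

lemma nn_integral_restrict:
  assumes B: "B \<subseteq> K" and g: "g \<in> borel_measurable (PiM B M)"
  shows "(\<integral>\<^sup>+x. g (restrict x B) \<partial>\<Omega>) = (\<integral>\<^sup>+x. g x \<partial>PiM B M)"
proof -
  have "(\<integral>\<^sup>+x. g x \<partial>PiM B M) = (\<integral>\<^sup>+x. g x \<partial>distr \<Omega> (PiM B M) (\<lambda>x. restrict x B))"
    by (simp add: marg_restrict B)
  also have "\<dots> = (\<integral>\<^sup>+x. g (restrict x B) \<partial>\<Omega>)"
    by (rule nn_integral_distr) (use measurable_restrict_subset[OF B, of M] g in auto)
  finally show ?thesis by simp
qed

lemma AE_restrict:
  assumes B: "B \<subseteq> K" and "AE x in PiM B M. P x"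
  shows "AE x in \<Omega>. P (restrict x B)"
proof -
  have "AE x in distr \<Omega> (PiM B M) (\<lambda>x. restrict x B). P x"
    by (subst marg_restrict[OF B]) (rule assms(2))
  then show ?thesis by (rule AE_distrD[OF measurable_restrict_subset[OF B, of M]])
qed

lemma fold:
  fixes f :: "_ \<Rightarrow> 'c::{banach,second_countable_topology}"
  assumes B: "B \<subseteq> K" and f: "integrable \<Omega> f"
  shows "(\<integral>x. f x \<partial>\<Omega>) = (\<integral>x. Pf B f x \<partial>PiM B M)"
  using product_integral_fold[of B "K - B" f] B f finK KB[OF B]
  by (simp add: Pf_def finite_subset)

lemma nn_fold:
  assumes B: "B \<subseteq> K" and f: "f \<in> borel_measurable \<Omega>"
  shows "(\<integral>\<^sup>+x. f x \<partial>\<Omega>) = (\<integral>\<^sup>+x. \<integral>\<^sup>+z. f (merge B (K - B) (x, z)) \<partial>PiM (K - B) M \<partial>PiM B M)"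
  using product_nn_integral_fold[of B "K - B" f] B f finK KB[OF B]
  by (simp add: finite_subset)

lemma AE_int_B:
  fixes f :: "_ \<Rightarrow> 'c::{banach,second_countable_topology}"
  assumes B: "B \<subseteq> K" and f: "integrable \<Omega> f"
  shows "AE x in PiM B M. integrable (PiM (K - B) M) (\<lambda>z. f (merge B (K - B) (x, z)))"
proof -
  interpret I: finite_product_sigma_finite M B by standard (use finK B in \<open>auto intro: finite_subset\<close>)
  interpret J: finite_product_sigma_finite M "K - B" by standard (use finK in auto)
  interpret P: pair_sigma_finite "PiM B M" "PiM (K - B) M" ..
  have "integrable (PiM B M \<Otimes>\<^sub>M PiM (K - B) M) (\<lambda>p. f (merge B (K - B) p))"
  proof (rule integrable_distr[OF meas_merge[OF B]])
    have "distr (PiM B M \<Otimes>\<^sub>M PiM (K - B) M) (PiM (B \<union> (K - B)) M) (merge B (K - B)) = PiM (B \<union> (K - B)) M"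
      by (rule distr_merge) (use finK B in \<open>auto intro: finite_subset\<close>)
    then show "integrable (distr (PiM B M \<Otimes>\<^sub>M PiM (K - B) M) \<Omega> (merge B (K - B))) f"
      using f KB[OF B] by simp
  qed
  from P.AE_integrable_fst'[OF this] show ?thesis by simp
qed

lemma AE_int:
  fixes f :: "_ \<Rightarrow> 'c::{banach,second_countable_topology}"
  assumes B: "B \<subseteq> K" and f: "integrable \<Omega> f"
  shows "AE x in \<Omega>. integrable (PiM (K - B) M) (\<lambda>z. f (merge B (K - B) (x, z)))"
  using AE_restrict[OF B AE_int_B[OF B f]] by simp

lemma L2_Pf:
  fixes f :: "_ \<Rightarrow> 'c::{banach,second_countable_topology}"
  assumes B: "B \<subseteq> K" and f[measurable]: "f \<in> borel_measurable \<Omega>"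
    and f2: "integrable \<Omega> (\<lambda>x. norm (f x) ^ 2)"
  shows "integrable \<Omega> (\<lambda>x. norm (Pf B f x) ^ 2)"
  unfolding integrable_iff_bounded
proof
  note m = meas_Pf[OF B f]
  show "(\<lambda>x. norm (Pf B f x) ^ 2) \<in> borel_measurable \<Omega>" using m by measurable
  interpret S: prob_space "PiM (K - B) M" by (rule prob_PiM)
  have mm: "(\<lambda>z. f (merge B (K - B) (x, z))) \<in> borel_measurable (PiM (K - B) M)"
    if "x \<in> space (PiM B M)" for x
    using measurable_comp[OF measurable_Pair1'[OF that] measurable_comp[OF meas_merge[OF B] f]]
    by (simp add: comp_def)
  have "(\<integral>\<^sup>+x. ennreal (norm (norm (Pf B f x) ^ 2)) \<partial>\<Omega>)
      = (\<integral>\<^sup>+x. \<integral>\<^sup>+z. ennreal (norm (Pf B f (merge B (K - B) (x, z))) ^ 2) \<partial>PiM (K - B) M \<partial>PiM B M)"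
    by (subst nn_fold[OF B]) (use m in auto)
  also have "\<dots> = (\<integral>\<^sup>+x. ennreal (norm (Pf B f x) ^ 2) \<partial>PiM B M)"
    by (simp add: Pf_merge S.emeasure_space_1)
  also have "\<dots> \<le> (\<integral>\<^sup>+x. \<integral>\<^sup>+z. ennreal (norm (f (merge B (K - B) (x, z))) ^ 2) \<partial>PiM (K - B) M \<partial>PiM B M)"
    unfolding Pf_def by (intro nn_integral_mono jensen_nn[OF S.prob_space_axioms] mm)
  also have "\<dots> = (\<integral>\<^sup>+x. ennreal (norm (f x) ^ 2) \<partial>\<Omega>)"
    by (subst nn_fold[OF B]) auto
  also have "\<dots> < \<infinity>" using f2 by (simp add: integrable_iff_bounded)
  finally show "(\<integral>\<^sup>+x. ennreal (norm (norm (Pf B f x) ^ 2)) \<partial>\<Omega>) < \<infinity>" .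
qed

end

context anova begin

lemma restrict_space: "x \<in> space \<Omega> \<Longrightarrow> A \<subseteq> K \<Longrightarrow> restrict x A \<in> space (PiM A M)"
  using measurable_space[OF measurable_restrict_subset[of A K M]] by blast

lemma meas_merge_x:
  assumes x: "x \<in> space \<Omega>" and A: "A \<subseteq> K"
  shows "(\<lambda>w. merge A (K - A) (x, w)) \<in> measurable (PiM (K - A) M) \<Omega>"
proof -
  have "(\<lambda>w. merge A (K - A) (restrict x A, w)) \<in> measurable (PiM (K - A) M) \<Omega>"
    using measurable_comp[OF measurable_Pair1'[OF restrict_space[OF x A]] meas_merge[OF A]]
    by (simp add: comp_def)
  then show ?thesis by simp
qed

lemma merge_tower:
  assumes "R \<subseteq> K" "R' \<subseteq> K"
  shows "merge R (K - R) (merge R' (K - R') (x, z), z')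
    = merge (R \<inter> R') (K - (R \<inter> R')) (x, merge (R - R') (K - R) (restrict z (R - R'), z'))"
  using assms by (auto simp: merge_def fun_eq_iff)

lemma tower:
  fixes h :: "_ \<Rightarrow> 'c::{banach,second_countable_topology}"
  assumes R: "R \<subseteq> K" and R': "R' \<subseteq> K" and h: "integrable \<Omega> h"
  shows "AE x in \<Omega>. Pf R' (Pf R h) x = Pf (R \<inter> R') h x"
proof -
  define A where "A = R \<inter> R'"
  have A: "A \<subseteq> K" using R by (auto simp: A_def)
  have "AE x in \<Omega>. Pf R' (Pf R h) x = Pf A h x"
  using AE_int[OF A h] AE_space
proof (eventually_elim)
  case (elim x)
  have hm[measurable]: "h \<in> borel_measurable \<Omega>" using h by auto
  have x: "x \<in> space \<Omega>" using elim by simp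
  have U: "(R - R') \<union> (K - R) = K - A" and D: "(R - R') \<inter> (K - R) = {}" using R R' by (auto simp: A_def)
  define G where "G a = (\<integral>z'. h (merge A (K - A) (x, merge (R - R') (K - R) (a, z'))) \<partial>PiM (K - R) M)" for a
  interpret S: prob_space "PiM (K - R) M" by (rule prob_PiM)
  have mU: "merge (R - R') (K - R) \<in> measurable (PiM (R - R') M \<Otimes>\<^sub>M PiM (K - R) M) (PiM (K - A) M)"
    using measurable_merge[of "R - R'" "K - R" M] U by simp
  have Gm: "G \<in> borel_measurable (PiM (R - R') M)"
  proof -
    have "(\<lambda>p. h (merge A (K - A) (x, merge (R - R') (K - R) p))) \<in> borel_measurable (PiM (R - R') M \<Otimes>\<^sub>M PiM (K - R) M)"
      using measurable_comp[OF measurable_comp[OF mU meas_merge_x[OF x A]] hm] by (simp add: comp_def)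
    then show ?thesis unfolding G_def
      by (intro S.borel_measurable_lebesgue_integral) (simp add: case_prod_beta')
  qed
  have "Pf R' (Pf R h) x = (\<integral>z. G (restrict z (R - R')) \<partial>PiM (K - R') M)"
    unfolding Pf_def G_def using R R' by (simp add: merge_tower A_def)
  also have "\<dots> = (\<integral>a. G a \<partial>PiM (R - R') M)"
  proof -
    have "PiM (R - R') M = distr (PiM (K - R') M) (PiM (R - R') M) (\<lambda>f. restrict f (R - R'))"
      by (rule distr_restrict) (use finK R in auto)
    moreover have "R - R' \<subseteq> K - R'" using R by auto
    ultimately show ?thesis
      using integral_distr[OF measurable_restrict_subset[of "R - R'" "K - R'" M] Gm] by simp
  qed
  also have "\<dots> = (\<integral>w. h (merge A (K - A) (x, w)) \<partial>PiM (K - A) M)"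
  proof -
    have "integrable (PiM ((R - R') \<union> (K - R)) M) (\<lambda>w. h (merge A (K - A) (x, w)))"
      using elim U by simp
    from product_integral_fold[OF D _ _ this] finK U R R' show ?thesis
      by (simp add: G_def finite_subset)
  qed
  also have "\<dots> = Pf A h x" by (simp add: Pf_def)
  finally show ?case .
qed
  then show ?thesis by (simp add: A_def)
qed

lemma Pf_K: "x \<in> space \<Omega> \<Longrightarrow> Pf K f x = f x"
proof -
  assume x: "x \<in> space \<Omega>"
  have "merge K {} (x, \<lambda>_. undefined) = x"
    using x by (auto simp: merge_def fun_eq_iff space_PiM PiE_def extensional_def)
  then show ?thesis
    by (simp add: Pf_def PiM_empty lebesgue_integral_count_space_finite)
qed

lemma Pf_empty: "Pf {} f x = integral\<^sup>L \<Omega> f"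
proof -
  have "Pf {} f x = (\<integral>z. f (restrict z K) \<partial>\<Omega>)"
    by (simp add: Pf_def merge_def restrict_def)
  also have "\<dots> = integral\<^sup>L \<Omega> f"
    by (rule Bochner_Integration.integral_cong) (auto intro!: arg_cong[where f=f] simp: space_PiM PiE_def extensional_def restrict_def fun_eq_iff)
  finally show ?thesis .
qed

lemma mean_Pf:
  fixes f :: "_ \<Rightarrow> 'c::{banach,second_countable_topology}"
  assumes B: "B \<subseteq> K" and f: "integrable \<Omega> f"
  shows "(\<integral>x. Pf B f x \<partial>\<Omega>) = integral\<^sup>L \<Omega> f"
proof -
  have fm: "f \<in> borel_measurable \<Omega>" using f by auto
  have "(\<integral>x. Pf B f x \<partial>\<Omega>) = (\<integral>x. Pf B f (restrict x B) \<partial>\<Omega>)" by (simp add: Pf_restrict)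
  also have "\<dots> = (\<integral>x. Pf B f x \<partial>PiM B M)" by (rule integral_restrict[OF B meas_Pf_B[OF B fm]])
  also have "\<dots> = integral\<^sup>L \<Omega> f" by (rule fold[OF B f, symmetric])
  finally show ?thesis .
qed

lemma L2_Pf_real:
  fixes f :: "_ \<Rightarrow> real"
  assumes B: "B \<subseteq> K" and f: "f \<in> borel_measurable \<Omega>" and f2: "integrable \<Omega> (\<lambda>x. f x ^ 2)"
  shows "integrable \<Omega> (\<lambda>x. Pf B f x ^ 2)"
  using L2_Pf[OF B f] f2 by simp

lemma pull:
  fixes f g :: "_ \<Rightarrow> real"
  assumes B: "B \<subseteq> K" and f[measurable]: "f \<in> borel_measurable \<Omega>" and g[measurable]: "g \<in> borel_measurable \<Omega>"
    and f2: "integrable \<Omega> (\<lambda>x. f x ^ 2)" and g2: "integrable \<Omega> (\<lambda>x. g x ^ 2)"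
  shows "(\<integral>x. Pf B f x * g x \<partial>\<Omega>) = (\<integral>x. Pf B f x * Pf B g x \<partial>\<Omega>)"
proof -
  note mf = meas_Pf[OF B f] and mg = meas_Pf[OF B g]
  have int: "integrable \<Omega> (\<lambda>x. Pf B f x * g x)"
    by (rule integrable_L2_mult[OF mf g L2_Pf_real[OF B f f2] g2])
  have "(\<integral>x. Pf B f x * g x \<partial>\<Omega>) = (\<integral>x. Pf B (\<lambda>y. Pf B f y * g y) x \<partial>PiM B M)"
    by (rule fold[OF B int])
  also have "\<dots> = (\<integral>x. Pf B f x * Pf B g x \<partial>PiM B M)"
    by (simp add: Pf_def[of B "\<lambda>y. Pf B f y * g y"] Pf_merge) (simp add: Pf_def)
  also have "\<dots> = (\<integral>x. Pf B f (restrict x B) * Pf B g (restrict x B) \<partial>\<Omega>)"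
    by (rule integral_restrict[OF B, symmetric]) (use meas_Pf_B[OF B f] meas_Pf_B[OF B g] in measurable)
  finally show ?thesis by (simp add: Pf_restrict)
qed

lemma gram:
  fixes h :: "_ \<Rightarrow> real"
  assumes R: "R \<subseteq> K" and R': "R' \<subseteq> K" and h[measurable]: "h \<in> borel_measurable \<Omega>"
    and h2: "integrable \<Omega> (\<lambda>x. h x ^ 2)"
  shows "(\<integral>x. Pf R h x * Pf R' h x \<partial>\<Omega>) = (\<integral>x. Pf (R \<inter> R') h x ^ 2 \<partial>\<Omega>)"
proof -
  define A where "A = R \<inter> R'"
  have A: "A \<subseteq> K" using R by (auto simp: A_def)
  have hi: "integrable \<Omega> h" by (rule P.square_integrable_imp_integrable[OF h h2])
  note mR = meas_Pf[OF R h] and mR' = meas_Pf[OF R' h] and mA = meas_Pf[OF A h]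
  note L2R = L2_Pf_real[OF R h h2] and L2R' = L2_Pf_real[OF R' h h2] and L2A = L2_Pf_real[OF A h h2]
  have "(\<integral>x. Pf R h x * Pf R' h x \<partial>\<Omega>) = (\<integral>x. Pf R' h x * Pf R h x \<partial>\<Omega>)" by (simp add: mult.commute)
  also have "\<dots> = (\<integral>x. Pf R' h x * Pf R' (Pf R h) x \<partial>\<Omega>)"
    by (rule pull[OF R' h mR h2 L2R])
  also have "\<dots> = (\<integral>x. Pf A h x * Pf R' h x \<partial>\<Omega>)"
  proof (rule integral_cong_AE)
    show "(\<lambda>x. Pf R' h x * Pf R' (Pf R h) x) \<in> borel_measurable \<Omega>"
      by (intro borel_measurable_times mR' meas_Pf[OF R' mR])
    show "(\<lambda>x. Pf A h x * Pf R' h x) \<in> borel_measurable \<Omega>"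
      by (intro borel_measurable_times mR' mA)
    show "AE x in \<Omega>. Pf R' h x * Pf R' (Pf R h) x = Pf A h x * Pf R' h x"
      using tower[OF R R' hi] by eventually_elim (simp add: A_def mult.commute)
  qed
  also have "\<dots> = (\<integral>x. Pf A h x * Pf A (Pf R' h) x \<partial>\<Omega>)"
    by (rule pull[OF A h mR' h2 L2R'])
  also have "\<dots> = (\<integral>x. Pf A h x ^ 2 \<partial>\<Omega>)"
  proof (rule integral_cong_AE)
    show "AE x in \<Omega>. Pf A h x * Pf A (Pf R' h) x = Pf A h x ^ 2"
      using tower[OF R' A hi] by eventually_elim (simp add: A_def Int_absorb1 power2_eq_square inf_commute)
    show "(\<lambda>x. Pf A h x * Pf A (Pf R' h) x) \<in> borel_measurable \<Omega>"
      by (intro borel_measurable_times mA meas_Pf[OF A mR'])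
    show "(\<lambda>x. Pf A h x ^ 2) \<in> borel_measurable \<Omega>"
      using mA by measurable
  qed
  finally show ?thesis by (simp add: A_def)
qed

lemma vdrop:
  fixes h :: "_ \<Rightarrow> real" and bl :: "'s set \<Rightarrow> 'i set" and I :: "'s set"
  assumes I: "finite I" and m: "1 \<le> m" "m \<le> card I"
    and bl_sub: "\<And>R. R \<subseteq> I \<Longrightarrow> bl R \<subseteq> K"
    and bl_int: "\<And>R R'. R \<subseteq> I \<Longrightarrow> R' \<subseteq> I \<Longrightarrow> bl (R \<inter> R') = bl R \<inter> bl R'"
    and bl_I: "bl I = K" and bl_0: "bl {} = {}"
    and h[measurable]: "h \<in> borel_measurable \<Omega>" and h2: "integrable \<Omega> (\<lambda>x. h x ^ 2)"
  shows "(\<Sum>S\<in>{S. S \<subseteq> I \<and> card S = m}. \<integral>x. (Pf (bl S) h x - integral\<^sup>L \<Omega> h) ^ 2 \<partial>\<Omega>)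
     \<le> real ((card I - 1) choose (m - 1)) * (\<integral>x. (h x - integral\<^sup>L \<Omega> h) ^ 2 \<partial>\<Omega>)"
proof -
  define c where "c = integral\<^sup>L \<Omega> h"
  define \<psi> where "\<psi> R = (\<integral>x. Pf (bl R) h x ^ 2 \<partial>\<Omega>)" for R
  have hi: "integrable \<Omega> h" by (rule P.square_integrable_imp_integrable[OF h h2])
  have var: "(\<integral>x. (Pf (bl S) h x - c) ^ 2 \<partial>\<Omega>) = \<psi> S - \<psi> {}" if S: "S \<subseteq> I" for S
  proof -
    note B = bl_sub[OF S]
    have mP: "Pf (bl S) h \<in> borel_measurable \<Omega>" by (rule meas_Pf[OF B h])
    have iP: "integrable \<Omega> (Pf (bl S) h)"
      by (rule P.square_integrable_imp_integrable[OF mP L2_Pf_real[OF B h h2]])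
    have "(\<integral>x. (Pf (bl S) h x - c) ^ 2 \<partial>\<Omega>) = (\<integral>x. Pf (bl S) h x ^ 2 - 2 * c * Pf (bl S) h x + c ^ 2 \<partial>\<Omega>)"
      by (simp add: power2_diff algebra_simps)
    also have "\<dots> = \<psi> S - 2 * c * (\<integral>x. Pf (bl S) h x \<partial>\<Omega>) + c ^ 2"
      using L2_Pf_real[OF B h h2] iP by (simp add: \<psi>_def P.prob_space)
    finally have e1: "(\<integral>x. (Pf (bl S) h x - c) ^ 2 \<partial>\<Omega>) = \<psi> S - 2 * c * (\<integral>x. Pf (bl S) h x \<partial>\<Omega>) + c ^ 2" .
    have e2: "(\<integral>x. Pf (bl S) h x \<partial>\<Omega>) = c" using mean_Pf[OF B hi] by (simp add: c_def)
    have e3: "\<psi> {} = c ^ 2" by (simp add: \<psi>_def bl_0 Pf_empty c_def P.prob_space)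
    show ?thesis using e1 e2 e3 by (simp add: power2_eq_square)
  qed
  have varI: "(\<integral>x. (h x - c) ^ 2 \<partial>\<Omega>) = \<psi> I - \<psi> {}"
  proof -
    have "(\<integral>x. (h x - c) ^ 2 \<partial>\<Omega>) = (\<integral>x. (Pf (bl I) h x - c) ^ 2 \<partial>\<Omega>)"
      by (rule Bochner_Integration.integral_cong) (auto simp: bl_I Pf_K)
    then show ?thesis using var[of I] by simp
  qed
  have pos: "mob \<psi> T \<ge> 0" if T: "T \<subseteq> I" for T
  proof -
    have fT: "finite T" using T I by (rule finite_subset)
    define s where "s R = ((-1::real)^card(T-R))" for R
    have blT: "R \<subseteq> I" if "R \<in> Pow T" for R using that T by auto
    have mPR: "Pf (bl R) h \<in> borel_measurable \<Omega>" if "R \<in> Pow T" for R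
      by (rule meas_Pf[OF bl_sub[OF blT[OF that]] h])
    have L2R: "integrable \<Omega> (\<lambda>x. Pf (bl R) h x ^ 2)" if "R \<in> Pow T" for R
      by (rule L2_Pf_real[OF bl_sub[OF blT[OF that]] h h2])
    have iRR: "integrable \<Omega> (\<lambda>x. Pf (bl R) h x * Pf (bl R') h x)" if "R \<in> Pow T" "R' \<in> Pow T" for R R'
      by (rule integrable_L2_mult[OF mPR[OF that(1)] mPR[OF that(2)] L2R[OF that(1)] L2R[OF that(2)]])
    have "mob \<psi> T = (\<Sum>R\<in>Pow T. \<Sum>R'\<in>Pow T. (s R * s R') * \<psi> (R \<inter> R'))"
      using gram_mob[OF fT, of \<psi>] by (simp add: s_def)
    also have "\<dots> = (\<Sum>R\<in>Pow T. \<Sum>R'\<in>Pow T. (s R * s R') * (\<integral>x. Pf (bl R) h x * Pf (bl R') h x \<partial>\<Omega>))"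
    proof (intro sum.cong refl)
      fix R R' assume "R \<in> Pow T" "R' \<in> Pow T"
      then have "R \<subseteq> I" "R' \<subseteq> I" using T by auto
      then show "(s R * s R') * \<psi> (R \<inter> R') = (s R * s R') * (\<integral>x. Pf (bl R) h x * Pf (bl R') h x \<partial>\<Omega>)"
        using gram[OF bl_sub bl_sub h h2] bl_int by (simp add: \<psi>_def)
    qed
    also have "\<dots> = (\<Sum>R\<in>Pow T. \<integral>x. (\<Sum>R'\<in>Pow T. (s R * s R') * (Pf (bl R) h x * Pf (bl R') h x)) \<partial>\<Omega>)"
      by (intro sum.cong refl, subst Bochner_Integration.integral_sum) (auto intro!: integrable_mult_right iRR)
    also have "\<dots> = (\<integral>x. (\<Sum>R\<in>Pow T. \<Sum>R'\<in>Pow T. (s R * s R') * (Pf (bl R) h x * Pf (bl R') h x)) \<partial>\<Omega>)"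
      by (subst Bochner_Integration.integral_sum) (auto intro!: Bochner_Integration.integrable_sum integrable_mult_right iRR)
    also have "\<dots> = (\<integral>x. (\<Sum>R\<in>Pow T. s R * Pf (bl R) h x) ^ 2 \<partial>\<Omega>)"
      by (simp add: power2_eq_square sum_product mult_ac)
    also have "\<dots> \<ge> 0" by simp
    finally show ?thesis .
  qed
  have "(\<Sum>S\<in>{S. S \<subseteq> I \<and> card S = m}. \<integral>x. (Pf (bl S) h x - c) ^ 2 \<partial>\<Omega>)
      = (\<Sum>S\<in>{S. S \<subseteq> I \<and> card S = m}. \<psi> S - \<psi> {})"
    by (rule sum.cong) (auto simp: var)
  also have "\<dots> \<le> real ((card I - 1) choose (m - 1)) * (\<psi> I - \<psi> {})"
    by (rule variance_drop_comb[OF I m]) (use pos in auto)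
  finally show ?thesis using varI by (simp add: c_def)
qed

end


locale kapp =
  fixes F :: "nat \<Rightarrow> 'a::euclidean_space measure" and N n :: nat
  assumes F: "\<And>i. i \<in> {1..N} \<Longrightarrow> distr_2nd (F i)" and n: "n \<ge> 1" and N: "N \<ge> 1"
begin

definition I :: "nat set" where "I = {1..N}"

lemma finI[simp]: "finite I" by (simp add: I_def)
lemma cardI: "card I = N" by (simp add: I_def)
abbreviation "J \<equiv> {..<n}"
abbreviation "K \<equiv> I \<times> J"

definition MM :: "nat \<times> nat \<Rightarrow> 'a measure" where
  "MM p = (if fst p \<in> I then F (fst p) else return borel 0)"

lemma F_prob: "i \<in> I \<Longrightarrow> prob_space (F i)" using F by (simp add: distr_2nd_def I_def)
lemma F_sets: "i \<in> I \<Longrightarrow> sets (F i) = sets borel" using F by (simp add: distr_2nd_def I_def)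

lemma MM_prob: "prob_space (MM p)"
proof (cases "fst p \<in> I")
  case True
  then have "MM p = F (fst p)" by (simp add: MM_def)
  then show ?thesis using True by (simp add: F_prob)
next
  case False
  then have "MM p = return borel 0" by (simp only: MM_def if_not_P[OF False] if_False)
  then show ?thesis by (simp add: prob_space_return)
qed

lemma MM_sets: "sets (MM p) = sets borel"
proof (cases "fst p \<in> I")
  case True
  then have "MM p = F (fst p)" by (simp add: MM_def)
  then show ?thesis using True by (simp add: F_sets)
next
  case False
  then have "MM p = return borel 0" by (simp only: MM_def if_not_P[OF False] if_False)
  then show ?thesis by simp
qed

sublocale A: anova MM K
  unfolding anova_def by (simp add: MM_prob)

abbreviation "\<Omega> \<equiv> PiM K MM"
abbreviation "W \<equiv> PiM J (\<lambda>_. borel :: 'a measure)"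

lemma sets_PiMM: "sets (PiM X MM) = sets (PiM X (\<lambda>_. borel :: 'a measure))"
  by (rule sets_PiM_cong) (auto simp: MM_sets)

lemma sets_PiF: "S \<subseteq> I \<Longrightarrow> sets (PiM S F) = sets (PiM S (\<lambda>_. borel :: 'a measure))"
  by (rule sets_PiM_cong) (auto simp: F_sets)

lemma meas_PiMM: "f \<in> measurable (PiM X MM) Q \<longleftrightarrow> f \<in> measurable (PiM X (\<lambda>_. borel :: 'a measure)) Q"
  using measurable_cong_sets[OF sets_PiMM[of X] refl, of Q] by (rule arg_cong)

lemma meas_PiF: "S \<subseteq> I \<Longrightarrow> f \<in> measurable (PiM S F) Q \<longleftrightarrow> f \<in> measurable (PiM S (\<lambda>_. borel :: 'a measure)) Q"
  using measurable_cong_sets[OF sets_PiF refl, of S Q] by (rule arg_cong)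

definition xS :: "nat set \<Rightarrow> 'a \<Rightarrow> (nat \<times> nat \<Rightarrow> 'a) \<Rightarrow> nat \<Rightarrow> 'a" where
  "xS S \<theta> \<omega> = (\<lambda>j\<in>J. (\<Sum>i\<in>S. \<omega> (i, j)) + \<theta>)"

lemma meas_xS:
  assumes S: "S \<subseteq> I"
  shows "xS S \<theta> \<in> measurable \<Omega> W"
proof -
  have "xS S \<theta> \<in> measurable (PiM K (\<lambda>_. borel :: 'a measure)) W"
    unfolding xS_def
    by (intro measurable_restrict borel_measurable_add borel_measurable_sum measurable_const
          measurable_component_singleton) (use S in auto)
  then show ?thesis by (simp only: meas_PiMM)
qed

lemma dist:
  assumes S: "S \<subseteq> I"
  shows "distr \<Omega> W (xS S \<theta>) = sample_law (conv_set F S) n \<theta>"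
proof -
  define Y where "Y j \<omega> = (\<Sum>i\<in>S. \<omega> (i, j)) + \<theta>" for j :: nat and \<omega> :: "nat \<times> nat \<Rightarrow> 'a"
  define g2 where "g2 y = (\<Sum>i\<in>S. y i) + \<theta>" for y :: "nat \<Rightarrow> 'a"
  define D where "D = distr (PiM S F) borel g2"
  have "0 \<in> J" using n by simp
  then have Jne: "J \<noteq> {}" by blast
  have "(1, 0) \<in> K" using n N by (simp add: I_def)
  then have Kne: "K \<noteq> {}" by blast
  have g2m: "g2 \<in> borel_measurable (PiM S F)"
  proof -
    have "g2 \<in> borel_measurable (PiM S (\<lambda>_. borel :: 'a measure))"
      unfolding g2_def by (intro borel_measurable_add borel_measurable_sum measurable_const
          measurable_component_singleton) auto
    then show ?thesis by (simp only: meas_PiF[OF S])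
  qed
  have rvc: "(\<lambda>\<omega>. \<omega> p) \<in> measurable \<Omega> (MM p)" if "p \<in> K" for p
    using that by (intro measurable_component_singleton)
  have indc: "A.P.indep_vars MM (\<lambda>p \<omega>. \<omega> p) K"
  proof (subst A.P.indep_vars_iff_distr_eq_PiM'[OF Kne rvc])
    have "distr \<Omega> \<Omega> (\<lambda>x. \<lambda>p\<in>K. x p) = \<Omega>"
      using A.distr_restrict[of K K] by simp
    also have "\<Omega> = PiM K (\<lambda>p. distr \<Omega> (MM p) (\<lambda>\<omega>. \<omega> p))"
      by (intro PiM_cong refl A.PiM_component[symmetric])
    finally show "distr \<Omega> (PiM K MM) (\<lambda>x. \<lambda>p\<in>K. x p) = PiM K (\<lambda>p. distr \<Omega> (MM p) (\<lambda>\<omega>. \<omega> p))" .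
  qed simp
  have indb: "A.P.indep_vars (\<lambda>j. PiM (S \<times> {j}) MM) (\<lambda>j \<omega>. restrict (\<lambda>p. \<omega> p) (S \<times> {j})) J"
    by (rule A.P.indep_vars_restrict[OF indc]) (use S in \<open>auto simp: disjoint_family_on_def\<close>)
  define g1 where "g1 j v = (\<Sum>i\<in>S. v (i, j)) + \<theta>" for j :: nat and v :: "nat \<times> nat \<Rightarrow> 'a"
  have g1m: "g1 j \<in> borel_measurable (PiM (S \<times> {j}) MM)" for j
  proof -
    have "g1 j \<in> borel_measurable (PiM (S \<times> {j}) (\<lambda>_. borel :: 'a measure))"
      unfolding g1_def by (intro borel_measurable_add borel_measurable_sum measurable_const
          measurable_component_singleton) auto
    then show ?thesis by (simp only: meas_PiMM)
  qed
  have "A.P.indep_vars (\<lambda>_. borel) (\<lambda>j \<omega>. g1 j (restrict (\<lambda>p. \<omega> p) (S \<times> {j}))) J"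
    by (rule A.P.indep_vars_compose2[OF indb g1m])
  moreover have "(\<lambda>j \<omega>. g1 j (restrict (\<lambda>p. \<omega> p) (S \<times> {j}))) = Y"
    by (auto simp: fun_eq_iff g1_def Y_def intro!: sum.cong)
  ultimately have indY: "A.P.indep_vars (\<lambda>_. borel) Y J" by simp
  have rvY: "Y j \<in> measurable \<Omega> borel" if "j \<in> J" for j
  proof -
    have "Y j \<in> borel_measurable (PiM K (\<lambda>_. borel :: 'a measure))"
      unfolding Y_def by (intro borel_measurable_add borel_measurable_sum measurable_const
          measurable_component_singleton) (use S that in auto)
    then show ?thesis by (simp only: meas_PiMM)
  qed
  have distY: "distr \<Omega> borel (Y j) = D" if j: "j \<in> J" for j
  proof -
    have Sj: "S \<times> {j} \<subseteq> K" using S j by auto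
    have "distr \<Omega> borel (Y j) = distr \<Omega> borel (\<lambda>\<omega>. g1 j (restrict \<omega> (S \<times> {j})))"
      by (rule distr_cong) (auto simp: Y_def g1_def intro!: sum.cong)
    also have "\<dots> = distr (distr \<Omega> (PiM (S \<times> {j}) MM) (\<lambda>\<omega>. restrict \<omega> (S \<times> {j}))) borel (g1 j)"
      by (rule distr_distr[symmetric, OF g1m measurable_restrict_subset[OF Sj], unfolded comp_def])
    also have "\<dots> = distr (PiM (S \<times> {j}) MM) borel (g1 j)"
      by (subst A.marg_restrict[OF Sj]) (rule refl)
    also have "\<dots> = distr (PiM (S \<times> {j}) MM) borel (\<lambda>v. g2 (\<lambda>i\<in>S. v (i, j)))"
      by (rule distr_cong) (auto simp: g1_def g2_def)
    also have "\<dots> = distr (distr (PiM (S \<times> {j}) MM) (PiM S (\<lambda>i. MM (i, j))) (\<lambda>v. \<lambda>i\<in>S. v (i, j))) borel g2"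
    proof (rule distr_distr[symmetric, unfolded comp_def])
      show "g2 \<in> borel_measurable (PiM S (\<lambda>i. MM (i, j)))"
      proof -
        have g: "g2 \<in> borel_measurable (PiM S (\<lambda>_. borel :: 'a measure))" using g2m by (simp only: meas_PiF[OF S])
        have "sets (PiM S (\<lambda>i. MM (i, j))) = sets (PiM S (\<lambda>_. borel :: 'a measure))"
          by (rule sets_PiM_cong) (auto simp: MM_sets)
        from measurable_cong_sets[OF this refl, of borel]
        have eq: "borel_measurable (PiM S (\<lambda>i. MM (i, j))) = borel_measurable (PiM S (\<lambda>_. borel :: 'a measure))" .
        show ?thesis by (subst eq) (rule g)
      qed
      show "(\<lambda>v. \<lambda>i\<in>S. v (i, j)) \<in> measurable (PiM (S \<times> {j}) MM) (PiM S (\<lambda>i. MM (i, j)))"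
        by (intro measurable_restrict measurable_component_singleton) auto
    qed
    also have "distr (PiM (S \<times> {j}) MM) (PiM S (\<lambda>i. MM (i, j))) (\<lambda>v. \<lambda>i\<in>S. v (i, j)) = PiM S (\<lambda>i. MM (i, j))"
      by (rule distr_PiM_reindex) (auto simp: MM_prob inj_on_def)
    also have "PiM S (\<lambda>i. MM (i, j)) = PiM S F"
      by (rule PiM_cong) (use S in \<open>auto simp: MM_def\<close>)
    finally show ?thesis by (simp add: D_def)
  qed
  have "distr \<Omega> W (xS S \<theta>) = distr \<Omega> W (\<lambda>\<omega>. \<lambda>j\<in>J. Y j \<omega>)"
    by (simp add: xS_def[abs_def] Y_def)
  also have "\<dots> = PiM J (\<lambda>j. distr \<Omega> borel (Y j))"
    using A.P.indep_vars_iff_distr_eq_PiM'[OF Jne rvY] indY by simp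
  also have "\<dots> = PiM J (\<lambda>_. D)"
    by (intro PiM_cong refl distY) simp
  also have "D = distr (conv_set F S) borel (\<lambda>x. x + \<theta>)"
  proof -
    have sm: "(\<lambda>x. \<Sum>i\<in>S. x i) \<in> measurable (PiM S F) borel"
    proof -
      have "(\<lambda>x. \<Sum>i\<in>S. x i) \<in> borel_measurable (PiM S (\<lambda>_. borel :: 'a measure))"
        by (intro borel_measurable_sum measurable_component_singleton) auto
      then show ?thesis by (simp only: meas_PiF[OF S])
    qed
    show ?thesis unfolding conv_set_def D_def g2_def
      by (subst distr_distr) (use sm in \<open>auto simp: comp_def\<close>)
  qed
  finally show ?thesis by (simp add: sample_law_def)
qed

lemma KS: "S \<subseteq> I \<Longrightarrow> K - S \<times> J = (I - S) \<times> J" by auto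

definition phi :: "nat set \<Rightarrow> ((nat \<Rightarrow> 'a) \<Rightarrow> 'a) \<Rightarrow> (nat \<Rightarrow> 'a) \<Rightarrow> (nat \<times> nat \<Rightarrow> 'a) \<Rightarrow> 'a" where
  "phi S t w z = t (\<lambda>j\<in>J. w j + (\<Sum>i\<in>I - S. z (i, j)))"

definition tS :: "nat set \<Rightarrow> ((nat \<Rightarrow> 'a) \<Rightarrow> 'a) \<Rightarrow> (nat \<Rightarrow> 'a) \<Rightarrow> 'a" where
  "tS S t w = (if integrable (PiM ((I - S) \<times> J) MM) (phi S t w)
     then \<integral>z. phi S t w z \<partial>PiM ((I - S) \<times> J) MM else (1 / real n) *\<^sub>R (\<Sum>j\<in>J. w j))"

lemma meas_phi:
  assumes t: "t \<in> borel_measurable W"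
  shows "(\<lambda>p. phi S t (fst p) (snd p)) \<in> borel_measurable (W \<Otimes>\<^sub>M PiM ((I - S) \<times> J) MM)"
proof -
  have "(\<lambda>p. \<lambda>j\<in>J. fst p j + (\<Sum>i\<in>I - S. snd p (i, j))) \<in> measurable (W \<Otimes>\<^sub>M PiM ((I - S) \<times> J) (\<lambda>_. borel :: 'a measure)) W"
    by (intro measurable_restrict borel_measurable_add borel_measurable_sum
        measurable_compose[OF measurable_fst measurable_component_singleton]
        measurable_compose[OF measurable_snd measurable_component_singleton]) auto
  moreover have "sets (W \<Otimes>\<^sub>M PiM ((I - S) \<times> J) MM) = sets (W \<Otimes>\<^sub>M PiM ((I - S) \<times> J) (\<lambda>_. borel :: 'a measure))"
    by (rule sets_pair_measure_cong) (simp_all add: sets_PiMM)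
  ultimately have "(\<lambda>p. \<lambda>j\<in>J. fst p j + (\<Sum>i\<in>I - S. snd p (i, j))) \<in> measurable (W \<Otimes>\<^sub>M PiM ((I - S) \<times> J) MM) W"
    using measurable_cong_sets by blast
  from measurable_comp[OF this t] show ?thesis by (simp add: comp_def phi_def)
qed

lemma meas_tS:
  assumes t: "t \<in> borel_measurable W"
  shows "tS S t \<in> borel_measurable W"
proof -
  let ?N = "PiM ((I - S) \<times> J) MM"
  interpret NS: prob_space ?N by (rule A.prob_PiM)
  note mp = meas_phi[OF t, of S]
  have mp': "case_prod (phi S t) \<in> borel_measurable (W \<Otimes>\<^sub>M ?N)"
    using mp by (simp add: case_prod_beta')
  have m1: "(\<lambda>w. \<integral>z. phi S t w z \<partial>?N) \<in> borel_measurable W"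
    by (rule NS.borel_measurable_lebesgue_integral[OF mp'])
  have mpw: "phi S t w \<in> borel_measurable ?N" if "w \<in> space W" for w
    using measurable_Pair2[OF mp that] by simp
  have "(\<lambda>w. \<integral>\<^sup>+z. ennreal (norm (phi S t w z)) \<partial>?N) \<in> borel_measurable W"
  proof (rule NS.borel_measurable_nn_integral)
    show "case_prod (\<lambda>w z. ennreal (norm (phi S t w z))) \<in> borel_measurable (W \<Otimes>\<^sub>M ?N)"
      using mp by (simp add: case_prod_beta')
  qed
  then have "{w \<in> space W. (\<integral>\<^sup>+z. ennreal (norm (phi S t w z)) \<partial>?N) < \<infinity>} \<in> sets W"
    by measurable
  moreover have "{w \<in> space W. integrable ?N (phi S t w)} = {w \<in> space W. (\<integral>\<^sup>+z. ennreal (norm (phi S t w z)) \<partial>?N) < \<infinity>}"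
    using mpw by (auto simp: integrable_iff_bounded)
  ultimately have m3: "{w \<in> space W. integrable ?N (phi S t w)} \<in> sets W" by simp
  have m2: "(\<lambda>w. (1 / real n) *\<^sub>R (\<Sum>j\<in>J. w j)) \<in> borel_measurable W"
    by (intro borel_measurable_scaleR borel_measurable_sum measurable_component_singleton measurable_const) auto
  show ?thesis unfolding tS_def[abs_def] by (rule measurable_If[OF m1 m2 m3])
qed

lemma integrable_plus_const_iff:
  fixes f :: "_ \<Rightarrow> 'a"
  assumes "prob_space Q"
  shows "integrable Q (\<lambda>z. f z + c) \<longleftrightarrow> integrable Q f"
proof -
  interpret prob_space Q by fact
  show ?thesis
  proof
    assume "integrable Q (\<lambda>z. f z + c)"
    then have "integrable Q (\<lambda>z. (f z + c) - c)" by (intro Bochner_Integration.integrable_diff) auto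
    then show "integrable Q f" by simp
  qed (intro Bochner_Integration.integrable_add, auto)
qed

lemma equiv_tS:
  assumes t: "equivariant n t"
  shows "equivariant n (tS S t)"
  unfolding equivariant_def
proof safe
  have tm: "t \<in> borel_measurable W" using t by (simp add: equivariant_def)
  show "tS S t \<in> borel_measurable W" by (rule meas_tS[OF tm])
  fix w :: "nat \<Rightarrow> 'a" and c assume w: "w \<in> extensional J"
  let ?N = "PiM ((I - S) \<times> J) MM"
  interpret NS: prob_space ?N by (rule A.prob_PiM)
  define w' where "w' = restrict (\<lambda>i. w i + c) J"
  have ph: "phi S t w' = (\<lambda>z. phi S t w z + c)"
  proof
    fix z
    define x where "x = (\<lambda>j\<in>J. w j + (\<Sum>i\<in>I - S. z (i, j)))"
    have "x \<in> extensional J" by (simp add: x_def)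
    then have "t (restrict (\<lambda>j. x j + c) J) = t x + c" using t by (simp add: equivariant_def)
    moreover have "restrict (\<lambda>j. x j + c) J = (\<lambda>j\<in>J. w' j + (\<Sum>i\<in>I - S. z (i, j)))"
      by (auto simp: x_def w'_def fun_eq_iff algebra_simps)
    ultimately show "phi S t w' z = phi S t w z + c" by (simp add: phi_def x_def)
  qed
  have sw: "(\<Sum>j\<in>J. w' j) = (\<Sum>j\<in>J. w j) + real n *\<^sub>R c"
    by (simp add: w'_def sum.distrib sum_constant_scaleR)
  show "tS S t w' = tS S t w + c"
  proof (cases "integrable ?N (phi S t w)")
    case True
    then show ?thesis using NS.prob_space
      by (simp add: tS_def ph integrable_plus_const_iff[OF NS.prob_space_axioms] NS.emeasure_space_1)
  next
    case False
    then show ?thesis using n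
      by (simp add: tS_def ph integrable_plus_const_iff[OF NS.prob_space_axioms] sw scaleR_add_right)
  qed
qed

lemma phi_merge:
  assumes S: "S \<subseteq> I"
  shows "phi S t (xS S \<theta> \<omega>) z = t (xS I \<theta> (merge (S \<times> J) (K - S \<times> J) (\<omega>, z)))"
proof -
  have "(\<lambda>j\<in>J. xS S \<theta> \<omega> j + (\<Sum>i\<in>I - S. z (i, j))) = xS I \<theta> (merge (S \<times> J) (K - S \<times> J) (\<omega>, z))"
  proof
    fix j show "(\<lambda>j\<in>J. xS S \<theta> \<omega> j + (\<Sum>i\<in>I - S. z (i, j))) j = xS I \<theta> (merge (S \<times> J) (K - S \<times> J) (\<omega>, z)) j"
    proof (cases "j \<in> J")
      case True
      have "(\<Sum>i\<in>I. merge (S \<times> J) (K - S \<times> J) (\<omega>, z) (i, j))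
          = (\<Sum>i\<in>I - S. merge (S \<times> J) (K - S \<times> J) (\<omega>, z) (i, j)) + (\<Sum>i\<in>S. merge (S \<times> J) (K - S \<times> J) (\<omega>, z) (i, j))"
        using S by (intro sum.subset_diff) auto
      also have "\<dots> = (\<Sum>i\<in>I - S. z (i, j)) + (\<Sum>i\<in>S. \<omega> (i, j))"
        using True S by (intro arg_cong2[where f="(+)"] sum.cong) (auto simp: merge_def)
      finally show ?thesis using True by (simp add: xS_def algebra_simps)
    qed (simp add: xS_def)
  qed
  then show ?thesis by (simp add: phi_def)
qed

lemma integrable_of_L2:
  fixes f :: "_ \<Rightarrow> 'a"
  assumes f: "f \<in> borel_measurable \<Omega>" and f2: "integrable \<Omega> (\<lambda>x. norm (f x) ^ 2)"
  shows "integrable \<Omega> f"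
proof (rule Bochner_Integration.integrable_bound[of _ "\<lambda>x. 1 + norm (f x) ^ 2"])
  show "integrable \<Omega> (\<lambda>x. 1 + norm (f x) ^ 2)" using f2 by simp
  show "AE x in \<Omega>. norm (f x) \<le> norm (1 + norm (f x) ^ 2)"
  proof (rule AE_I2)
    fix x
    have a: "0 \<le> (norm (f x) - 1) ^ 2" by simp
    have "2 * norm (f x) \<le> 1 + norm (f x) ^ 2" using a by (simp add: power2_diff algebra_simps)
    then have "norm (f x) \<le> 1 + norm (f x) ^ 2" using norm_ge_zero[of "f x"] by linarith
    then show "norm (f x) \<le> norm (1 + norm (f x) ^ 2)" by simp
  qed
qed (rule f)

lemma AE_tS:
  assumes S: "S \<subseteq> I" and tm: "t \<in> borel_measurable W"
    and f2: "integrable \<Omega> (\<lambda>\<omega>. norm (t (xS I \<theta> \<omega>)) ^ 2)"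
  shows "AE \<omega> in \<Omega>. tS S t (xS S \<theta> \<omega>) = A.Pf (S \<times> J) (\<lambda>\<omega>. t (xS I \<theta> \<omega>)) \<omega>
    \<and> integrable (PiM ((I - S) \<times> J) MM) (\<lambda>z. t (xS I \<theta> (merge (S \<times> J) (K - S \<times> J) (\<omega>, z))))"
proof -
  have fm: "(\<lambda>\<omega>. t (xS I \<theta> \<omega>)) \<in> borel_measurable \<Omega>"
    using measurable_comp[OF meas_xS[of I \<theta>] tm] by (simp add: comp_def)
  have fi: "integrable \<Omega> (\<lambda>\<omega>. t (xS I \<theta> \<omega>))" by (rule integrable_of_L2[OF fm f2])
  have SJ: "S \<times> J \<subseteq> K" using S by auto
  show ?thesis using A.AE_int[OF SJ fi]
  proof eventually_elim
    case (elim \<omega>)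
    have e: "phi S t (xS S \<theta> \<omega>) = (\<lambda>z. t (xS I \<theta> (merge (S \<times> J) (K - S \<times> J) (\<omega>, z))))"
      by (rule ext) (rule phi_merge[OF S])
    from elim show ?case
      by (simp add: tS_def e A.Pf_def KS[OF S])
  qed
qed

lemma L2_f:
  fixes t :: "(nat \<Rightarrow> 'a) \<Rightarrow> 'a"
  assumes tm: "t \<in> borel_measurable W" and has: "has_2nd (sample_law (conv_set F I) n \<theta>) t"
  shows "integrable \<Omega> (\<lambda>\<omega>. norm (t (xS I \<theta> \<omega>)) ^ 2)"
proof -
  have "integrable (distr \<Omega> W (xS I \<theta>)) (\<lambda>x. norm (t x) ^ 2)"
    using has by (simp add: has_2nd_def dist[of I \<theta>])
  then show ?thesis
    by (subst (asm) integrable_distr_eq[OF meas_xS]) (use tm in auto)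
qed

lemma has2_tS:
  assumes S: "S \<subseteq> I" and tm: "t \<in> borel_measurable W"
    and has: "\<forall>\<theta>. has_2nd (sample_law (conv_set F I) n \<theta>) t"
  shows "\<forall>\<theta>. has_2nd (sample_law (conv_set F S) n \<theta>) (tS S t)"
proof
  fix \<theta>
  have f2: "integrable \<Omega> (\<lambda>\<omega>. norm (t (xS I \<theta> \<omega>)) ^ 2)" using L2_f[OF tm] has by blast
  have fm: "(\<lambda>\<omega>. t (xS I \<theta> \<omega>)) \<in> borel_measurable \<Omega>"
    using measurable_comp[OF meas_xS[of I \<theta>] tm] by (simp add: comp_def)
  have SJ: "S \<times> J \<subseteq> K" using S by auto
  have i1: "integrable \<Omega> (\<lambda>\<omega>. norm (A.Pf (S \<times> J) (\<lambda>\<omega>. t (xS I \<theta> \<omega>)) \<omega>) ^ 2)"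
    by (rule A.L2_Pf[OF SJ fm f2])
  have mP: "A.Pf (S \<times> J) (\<lambda>\<omega>. t (xS I \<theta> \<omega>)) \<in> borel_measurable \<Omega>" by (rule A.meas_Pf[OF SJ fm])
  have mt: "(\<lambda>\<omega>. tS S t (xS S \<theta> \<omega>)) \<in> borel_measurable \<Omega>"
    using measurable_comp[OF meas_xS[OF S] meas_tS[OF tm]] by (simp add: comp_def)
  have "integrable \<Omega> (\<lambda>\<omega>. norm (tS S t (xS S \<theta> \<omega>)) ^ 2)"
  proof (subst integrable_cong_AE)
    show "(\<lambda>\<omega>. norm (tS S t (xS S \<theta> \<omega>)) ^ 2) \<in> borel_measurable \<Omega>" using mt by measurable
    show "(\<lambda>\<omega>. norm (A.Pf (S \<times> J) (\<lambda>\<omega>. t (xS I \<theta> \<omega>)) \<omega>) ^ 2) \<in> borel_measurable \<Omega>" using mP by measurable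
    show "AE \<omega> in \<Omega>. norm (tS S t (xS S \<theta> \<omega>)) ^ 2 = norm (A.Pf (S \<times> J) (\<lambda>\<omega>. t (xS I \<theta> \<omega>)) \<omega>) ^ 2"
      using AE_tS[OF S tm f2] by eventually_elim simp
  qed (rule i1)
  then have "integrable (distr \<Omega> W (xS S \<theta>)) (\<lambda>x. norm (tS S t x) ^ 2)"
    by (subst integrable_distr_eq[OF meas_xS[OF S]]) (use meas_tS[OF tm, of S] in auto)
  then show "has_2nd (sample_law (conv_set F S) n \<theta>) (tS S t)"
    by (simp add: has_2nd_def dist[OF S])
qed

lemma h_props:
  fixes t :: "(nat \<Rightarrow> 'a) \<Rightarrow> 'a"
  assumes tm: "t \<in> borel_measurable W" and f2: "integrable \<Omega> (\<lambda>\<omega>. norm (t (xS I \<theta> \<omega>)) ^ 2)"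
  shows "(\<lambda>\<omega>. u \<bullet> t (xS I \<theta> \<omega>)) \<in> borel_measurable \<Omega>"
    and "integrable \<Omega> (\<lambda>\<omega>. (u \<bullet> t (xS I \<theta> \<omega>)) ^ 2)"
proof -
  have fm[measurable]: "(\<lambda>\<omega>. t (xS I \<theta> \<omega>)) \<in> borel_measurable \<Omega>"
    using measurable_comp[OF meas_xS[of I \<theta>] tm] by (simp add: comp_def)
  show hm: "(\<lambda>\<omega>. u \<bullet> t (xS I \<theta> \<omega>)) \<in> borel_measurable \<Omega>" by measurable
  show "integrable \<Omega> (\<lambda>\<omega>. (u \<bullet> t (xS I \<theta> \<omega>)) ^ 2)"
  proof (rule Bochner_Integration.integrable_bound[of _ "\<lambda>\<omega>. norm u ^ 2 * norm (t (xS I \<theta> \<omega>)) ^ 2"])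
    show "integrable \<Omega> (\<lambda>\<omega>. norm u ^ 2 * norm (t (xS I \<theta> \<omega>)) ^ 2)" using f2 by simp
    show "AE \<omega> in \<Omega>. norm ((u \<bullet> t (xS I \<theta> \<omega>)) ^ 2) \<le> norm (norm u ^ 2 * norm (t (xS I \<theta> \<omega>)) ^ 2)"
    proof (rule AE_I2)
      fix \<omega>
      have "\<bar>u \<bullet> t (xS I \<theta> \<omega>)\<bar> \<le> norm u * norm (t (xS I \<theta> \<omega>))" by (rule Cauchy_Schwarz_ineq2)
      then have "\<bar>u \<bullet> t (xS I \<theta> \<omega>)\<bar> ^ 2 \<le> (norm u * norm (t (xS I \<theta> \<omega>))) ^ 2"
        by (rule power_mono) simp
      then show "norm ((u \<bullet> t (xS I \<theta> \<omega>)) ^ 2) \<le> norm (norm u ^ 2 * norm (t (xS I \<theta> \<omega>)) ^ 2)"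
        by (simp add: power_mult_distrib)
    qed
    show "(\<lambda>\<omega>. (u \<bullet> t (xS I \<theta> \<omega>)) ^ 2) \<in> borel_measurable \<Omega>" by (intro borel_measurable_power hm)
  qed
qed

lemma cov_t:
  fixes t :: "(nat \<Rightarrow> 'a) \<Rightarrow> 'a"
  assumes tm: "t \<in> borel_measurable W"
  shows "cov_form (sample_law (conv_set F I) n \<theta>) t u
    = (\<integral>\<omega>. (u \<bullet> t (xS I \<theta> \<omega>) - (\<integral>\<omega>. u \<bullet> t (xS I \<theta> \<omega>) \<partial>\<Omega>)) ^ 2 \<partial>\<Omega>)"
proof -
  note tm[measurable]
  have m1: "(\<lambda>x. u \<bullet> t x) \<in> borel_measurable W" by measurable
  have e1: "(\<integral>y. u \<bullet> t y \<partial>distr \<Omega> W (xS I \<theta>)) = (\<integral>\<omega>. u \<bullet> t (xS I \<theta> \<omega>) \<partial>\<Omega>)"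
    by (rule integral_distr[OF meas_xS m1]) simp
  have m2: "(\<lambda>x. (u \<bullet> t x - (\<integral>\<omega>. u \<bullet> t (xS I \<theta> \<omega>) \<partial>\<Omega>)) ^ 2) \<in> borel_measurable W" by (intro borel_measurable_power borel_measurable_diff borel_measurable_const m1)
  show ?thesis
    unfolding cov_form_def dist[of I \<theta>, symmetric, OF subset_refl] e1
    by (rule integral_distr[OF meas_xS m2]) simp
qed

lemma cov_tS:
  assumes S: "S \<subseteq> I" and tm: "t \<in> borel_measurable W"
    and f2: "integrable \<Omega> (\<lambda>\<omega>. norm (t (xS I \<theta> \<omega>)) ^ 2)"
  shows "cov_form (sample_law (conv_set F S) n \<theta>) (tS S t) u
    = (\<integral>\<omega>. (A.Pf (S \<times> J) (\<lambda>\<omega>. u \<bullet> t (xS I \<theta> \<omega>)) \<omega> - (\<integral>\<omega>. u \<bullet> t (xS I \<theta> \<omega>) \<partial>\<Omega>)) ^ 2 \<partial>\<Omega>)"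
proof -
  define h where "h \<omega> = u \<bullet> t (xS I \<theta> \<omega>)" for \<omega>
  note hp = h_props[OF tm f2, of u, folded h_def]
  have SJ: "S \<times> J \<subseteq> K" using S by auto
  have hi: "integrable \<Omega> h" by (rule A.P.square_integrable_imp_integrable[OF hp])
  have mPh: "A.Pf (S \<times> J) h \<in> borel_measurable \<Omega>" by (rule A.meas_Pf[OF SJ hp(1)])
  have mtS: "tS S t \<in> borel_measurable W" by (rule meas_tS[OF tm])
  note mtS[measurable]
  have m1: "(\<lambda>x. u \<bullet> tS S t x) \<in> borel_measurable W" by measurable
  have AEe: "AE \<omega> in \<Omega>. u \<bullet> tS S t (xS S \<theta> \<omega>) = A.Pf (S \<times> J) h \<omega>"
    using AE_tS[OF S tm f2]
  proof eventually_elim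
    case (elim \<omega>)
    then show ?case
      by (simp add: A.Pf_def h_def KS[OF S])
  qed
  have mc: "(\<lambda>\<omega>. u \<bullet> tS S t (xS S \<theta> \<omega>)) \<in> borel_measurable \<Omega>"
    using measurable_comp[OF meas_xS[OF S] m1] by (simp add: comp_def)
  have e1: "(\<integral>y. u \<bullet> tS S t y \<partial>distr \<Omega> W (xS S \<theta>)) = (\<integral>\<omega>. h \<omega> \<partial>\<Omega>)"
  proof -
    have "(\<integral>y. u \<bullet> tS S t y \<partial>distr \<Omega> W (xS S \<theta>)) = (\<integral>\<omega>. u \<bullet> tS S t (xS S \<theta> \<omega>) \<partial>\<Omega>)"
      by (rule integral_distr[OF meas_xS[OF S] m1])
    also have "\<dots> = (\<integral>\<omega>. A.Pf (S \<times> J) h \<omega> \<partial>\<Omega>)"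
      by (rule integral_cong_AE[OF mc mPh AEe])
    also have "\<dots> = (\<integral>\<omega>. h \<omega> \<partial>\<Omega>)" by (rule A.mean_Pf[OF SJ hi])
    finally show ?thesis .
  qed
  define c where "c = (\<integral>\<omega>. h \<omega> \<partial>\<Omega>)"
  have m2: "(\<lambda>x. (u \<bullet> tS S t x - c) ^ 2) \<in> borel_measurable W" by (intro borel_measurable_power borel_measurable_diff borel_measurable_const m1)
  have "cov_form (sample_law (conv_set F S) n \<theta>) (tS S t) u = (\<integral>x. (u \<bullet> tS S t x - c) ^ 2 \<partial>distr \<Omega> W (xS S \<theta>))"
    unfolding cov_form_def dist[OF S, symmetric] e1 c_def ..
  also have "\<dots> = (\<integral>\<omega>. (u \<bullet> tS S t (xS S \<theta> \<omega>) - c) ^ 2 \<partial>\<Omega>)"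
    by (rule integral_distr[OF meas_xS[OF S] m2])
  also have "\<dots> = (\<integral>\<omega>. (A.Pf (S \<times> J) h \<omega> - c) ^ 2 \<partial>\<Omega>)"
  proof (rule integral_cong_AE)
    show "(\<lambda>\<omega>. (u \<bullet> tS S t (xS S \<theta> \<omega>) - c) ^ 2) \<in> borel_measurable \<Omega>" by (intro borel_measurable_power borel_measurable_diff borel_measurable_const mc)
    show "(\<lambda>\<omega>. (A.Pf (S \<times> J) h \<omega> - c) ^ 2) \<in> borel_measurable \<Omega>" by (intro borel_measurable_power borel_measurable_diff borel_measurable_const mPh)
    show "AE \<omega> in \<Omega>. (u \<bullet> tS S t (xS S \<theta> \<omega>) - c) ^ 2 = (A.Pf (S \<times> J) h \<omega> - c) ^ 2"
      using AEe by eventually_elim simp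
  qed
  finally show ?thesis by (simp add: c_def h_def[abs_def])
qed

lemma main_loc:
  assumes m: "1 \<le> m" "m \<le> N"
    and t: "is_pitman (conv_set F I) n t"
    and ts: "\<And>S. S \<subseteq> I \<Longrightarrow> card S = m \<Longrightarrow> is_pitman (conv_set F S) n (ts S)"
  shows "cov_form (sample_law (conv_set F I) n \<theta>) t u \<ge>
    (1 / real ((N - 1) choose (m - 1))) *
      (\<Sum>S\<in>{S. S \<subseteq> I \<and> card S = m}. cov_form (sample_law (conv_set F S) n \<theta>) (ts S) u)"
proof -
  have teq: "equivariant n t" and has: "\<forall>\<theta>. has_2nd (sample_law (conv_set F I) n \<theta>) t"
    using t by (auto simp: is_pitman_def)
  have tm: "t \<in> borel_measurable W" using teq by (simp add: equivariant_def)
  have f2: "integrable \<Omega> (\<lambda>\<omega>. norm (t (xS I \<theta> \<omega>)) ^ 2)" using L2_f[OF tm] has by blast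
  define h where "h \<omega> = u \<bullet> t (xS I \<theta> \<omega>)" for \<omega>
  note hp = h_props[OF tm f2, of u, folded h_def]
  define C where "C = real ((N - 1) choose (m - 1))"
  have Cpos: "C > 0" using m by (simp add: C_def)
  let ?A = "{S. S \<subseteq> I \<and> card S = m}"
  have "(\<Sum>S\<in>?A. cov_form (sample_law (conv_set F S) n \<theta>) (ts S) u)
      \<le> (\<Sum>S\<in>?A. cov_form (sample_law (conv_set F S) n \<theta>) (tS S t) u)"
  proof (rule sum_mono)
    fix S assume "S \<in> ?A"
    then have S: "S \<subseteq> I" "card S = m" by auto
    have "equivariant n (tS S t) \<and> (\<forall>\<theta>. has_2nd (sample_law (conv_set F S) n \<theta>) (tS S t))"
      using equiv_tS[OF teq] has2_tS[OF S(1) tm has] by blast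
    then show "cov_form (sample_law (conv_set F S) n \<theta>) (ts S) u \<le> cov_form (sample_law (conv_set F S) n \<theta>) (tS S t) u"
      using ts[OF S] unfolding is_pitman_def by blast
  qed
  also have "\<dots> = (\<Sum>S\<in>?A. \<integral>\<omega>. (A.Pf (S \<times> J) h \<omega> - (\<integral>\<omega>. h \<omega> \<partial>\<Omega>)) ^ 2 \<partial>\<Omega>)"
    by (rule sum.cong) (auto simp: cov_tS[OF _ tm f2] h_def[abs_def])
  also have "\<dots> \<le> C * (\<integral>\<omega>. (h \<omega> - (\<integral>\<omega>. h \<omega> \<partial>\<Omega>)) ^ 2 \<partial>\<Omega>)"
    unfolding C_def
    using A.vdrop[of I m "\<lambda>S. S \<times> J" h] m hp by (auto simp: cardI Times_Int_distrib1)
  also have "(\<integral>\<omega>. (h \<omega> - (\<integral>\<omega>. h \<omega> \<partial>\<Omega>)) ^ 2 \<partial>\<Omega>) = cov_form (sample_law (conv_set F I) n \<theta>) t u"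
    by (simp add: cov_t[OF tm] h_def[abs_def])
  finally have "(\<Sum>S\<in>?A. cov_form (sample_law (conv_set F S) n \<theta>) (ts S) u) \<le> C * cov_form (sample_law (conv_set F I) n \<theta>) t u" .
  then have "(1 / C) * (\<Sum>S\<in>?A. cov_form (sample_law (conv_set F S) n \<theta>) (ts S) u) \<le> cov_form (sample_law (conv_set F I) n \<theta>) t u"
    using Cpos by (simp add: field_simps)
  then show ?thesis unfolding C_def .
qed

end

theorem mainTheorem14:
  fixes F :: "nat \<Rightarrow> 'a::euclidean_space measure"
    and N n m :: nat
    and t :: "(nat \<Rightarrow> 'a) \<Rightarrow> 'a"
    and ts :: "nat set \<Rightarrow> (nat \<Rightarrow> 'a) \<Rightarrow> 'a"
    and \<theta> :: 'a
  assumes F: "\<And>i. i \<in> {1..N} \<Longrightarrow> distr_2nd (F i)"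
    and n: "n \<ge> 1"
    and m: "1 \<le> m" "m \<le> N"
    and t: "is_pitman (conv_set F {1..N}) n t"
    and ts: "\<And>S. S \<subseteq> {1..N} \<Longrightarrow> card S = m \<Longrightarrow> is_pitman (conv_set F S) n (ts S)"
  shows "\<forall>u. cov_form (sample_law (conv_set F {1..N}) n \<theta>) t u \<ge>
    (1 / real ((N - 1) choose (m - 1))) *
      (\<Sum>S\<in>{S. S \<subseteq> {1..N} \<and> card S = m}. cov_form (sample_law (conv_set F S) n \<theta>) (ts S) u)"
proof
  fix u
  interpret kapp F N n
    by unfold_locales (use F n m in auto)
  show "cov_form (sample_law (conv_set F {1..N}) n \<theta>) t u \<ge>
    (1 / real ((N - 1) choose (m - 1))) *
      (\<Sum>S\<in>{S. S \<subseteq> {1..N} \<and> card S = m}. cov_form (sample_law (conv_set F S) n \<theta>) (ts S) u)"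
    using main_loc[of m t ts \<theta> u] m t ts by (simp add: I_def)
qed

end
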